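(* There is an absolute constant $C>0$ such that for every $n\ge 1$ and every unweighted congestion game $\mathcal{G}$ with $n$ players and affine latency functions, $\mathrm{PoA}_{\max}(\mathcal{G})\le C\sqrt{n}$; that is, $\mathrm{PoA}_{\max}(\mathcal{G})=O(\sqrt{n})$.
   Context: A weighted congestion game consists of a finite set $[n]=\{1,\dots,n\}$ of players, a finite set $E$ of resources, for each player $i$ a weight $w_i>0$ and a nonempty finite strategy set $\Sigma_i\subseteq 2^E$, and for each resource $e$ a latency function $\ell_e:\mathbb{R}_{\ge 0}\to\mathbb{R}_{\ge 0}$. It is unweighted if $w_i=1$ for all $i$. Affine latency functions means $\ell_e(x)=\alpha_e x+\beta_e$ with $\alpha_e,\beta_e\ge 0$. For a strategy profile $S=(s_1,\dots,s_n)$, the congestion of $e$ is $L_e(S)=\sum_{i:\,e\in s_i}w_i$ and the cost of player $i$ is $c_i(S)=\sum_{e\in s_i}\ell_e(L_e(S))$. The maximum social cost is $\mathrm{MAX}(S)=\max_{i\in[n]}c_i(S)$. A pure Nash equilibrium (PNE) is a profile $S$ with $c_i(S)\le c_i(S_{-i}\diamond t)$ for all $i$ and $t\in\Sigma_i$, where $(S_{-i}\diamond t)$ replaces $s_i$ by $t$. $\mathrm{PoA}_{\max}(\mathcal{G})=\max_{S\ \mathrm{PNE}}\mathrm{MAX}(S)/\min_{S'}\mathrm{MAX}(S')$. *)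

theory Defs
  imports Complex_Main
begin

(* Unweighted congestion game with players {0..<n}, resource set E,
   strategy sets Sig i (i < n), affine latencies l_e(x) = alpha e * x + beta e. *)

definition valid_game :: "nat \<Rightarrow> 'e set \<Rightarrow> (nat \<Rightarrow> 'e set set) \<Rightarrow> ('e \<Rightarrow> real) \<Rightarrow> ('e \<Rightarrow> real) \<Rightarrow> bool" where
  "valid_game n E Sig alpha beta \<longleftrightarrow>
     finite E \<and>
     (\<forall>i<n. finite (Sig i) \<and> Sig i \<noteq> {} \<and> (\<forall>s\<in>Sig i. s \<subseteq> E)) \<and>
     (\<forall>e\<in>E. alpha e \<ge> 0 \<and> beta e \<ge> 0)"

definition is_profile :: "nat \<Rightarrow> (nat \<Rightarrow> 'e set set) \<Rightarrow> (nat \<Rightarrow> 'e set) \<Rightarrow> bool" where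
  "is_profile n Sig S \<longleftrightarrow> (\<forall>i<n. S i \<in> Sig i)"

definition load :: "nat \<Rightarrow> (nat \<Rightarrow> 'e set) \<Rightarrow> 'e \<Rightarrow> real" where
  "load n S e = real (card {i. i < n \<and> e \<in> S i})"

definition player_cost :: "nat \<Rightarrow> ('e \<Rightarrow> real) \<Rightarrow> ('e \<Rightarrow> real) \<Rightarrow> (nat \<Rightarrow> 'e set) \<Rightarrow> nat \<Rightarrow> real" where
  "player_cost n alpha beta S i = (\<Sum>e\<in>S i. alpha e * load n S e + beta e)"

definition max_cost :: "nat \<Rightarrow> ('e \<Rightarrow> real) \<Rightarrow> ('e \<Rightarrow> real) \<Rightarrow> (nat \<Rightarrow> 'e set) \<Rightarrow> real" where
  "max_cost n alpha beta S = Max ((player_cost n alpha beta S) ` {0..<n})"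

definition is_PNE :: "nat \<Rightarrow> (nat \<Rightarrow> 'e set set) \<Rightarrow> ('e \<Rightarrow> real) \<Rightarrow> ('e \<Rightarrow> real) \<Rightarrow> (nat \<Rightarrow> 'e set) \<Rightarrow> bool" where
  "is_PNE n Sig alpha beta S \<longleftrightarrow> is_profile n Sig S \<and>
     (\<forall>i<n. \<forall>t\<in>Sig i. player_cost n alpha beta S i \<le> player_cost n alpha beta (S(i := t)) i)"

end

theory Submission
  imports Defs
begin

lemma double_count:
  assumes "finite E" "\<forall>j<n. P j \<subseteq> E"
  shows "(\<Sum>j<n. \<Sum>e\<in>P j. f e) = (\<Sum>e\<in>E. f e * load n P e)"
proof -
  have "(\<Sum>j<n. \<Sum>e\<in>P j. f e) = (\<Sum>j<n. \<Sum>e\<in>E. if e \<in> P j then f e else 0)"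
  proof (rule sum.cong[OF refl])
    fix j assume "j \<in> {..<n}"
    then have "E \<inter> P j = P j" using assms by auto
    then show "(\<Sum>e\<in>P j. f e) = (\<Sum>e\<in>E. if e \<in> P j then f e else 0)"
      using sum.inter_restrict[OF assms(1), of f "P j"] by simp
  qed
  also have "\<dots> = (\<Sum>e\<in>E. \<Sum>j<n. if e \<in> P j then f e else 0)" by (rule sum.swap)
  also have "\<dots> = (\<Sum>e\<in>E. f e * load n P e)"
  proof (rule sum.cong[OF refl])
    fix e
    have "(\<Sum>j<n. if e \<in> P j then f e else 0) = (\<Sum>j\<in>{..<n} \<inter> {j. e \<in> P j}. f e)"
      using sum.inter_restrict[of "{..<n}" "\<lambda>_. f e" "{j. e \<in> P j}"] by simp
    also have "{..<n} \<inter> {j. e \<in> P j} = {j. j < n \<and> e \<in> P j}" by auto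
    finally show "(\<Sum>j<n. if e \<in> P j then f e else 0) = f e * load n P e"
      unfolding load_def by simp
  qed
  finally show ?thesis .
qed

lemma load_upd: "load n (S(j:=t)) e \<le> load n S e + 1"
proof -
  have "{i. i<n \<and> e \<in> (S(j:=t)) i} \<subseteq> insert j {i. i<n \<and> e\<in>S i}" by auto
  then have "card {i. i<n \<and> e \<in> (S(j:=t)) i} \<le> card (insert j {i. i<n \<and> e\<in>S i})"
    by (intro card_mono) auto
  also have "\<dots> \<le> card {i. i<n \<and> e\<in>S i} + 1" by (simp add: card_insert_if)
  finally show ?thesis unfolding load_def by simp
qed

lemma load_ge1: assumes "j < n" "e \<in> P j" shows "load n P e \<ge> 1"
proof -
  have "j \<in> {i. i<n \<and> e\<in>P i}" using assms by auto
  then have "card {i. i<n \<and> e\<in>P i} > 0" by (subst card_gt_0_iff) auto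
  then show ?thesis unfolding load_def by simp
qed

lemma load_sq: "load n P e \<le> load n P e * load n P e"
proof -
  have "card {i. i<n \<and> e\<in>P i} \<le> card {i. i<n \<and> e\<in>P i} * card {i. i<n \<and> e\<in>P i}"
    by (cases "card {i. i<n \<and> e\<in>P i}") auto
  then show ?thesis unfolding load_def by (metis of_nat_le_iff of_nat_mult)
qed

lemma load_nn: "load n P e \<ge> 0" unfolding load_def by simp

lemma main_bound:
  assumes n: "n \<ge> 1" and vg: "valid_game n E Sig alpha beta"
    and pne: "is_PNE n Sig alpha beta S" and prof: "is_profile n Sig S'" and i: "i < n"
  shows "player_cost n alpha beta S i \<le> 3 * sqrt n * max_cost n alpha beta S'"
proof -
  define L where "L = load n S"
  define L' where "L' = load n S'"
  define M where "M = max_cost n alpha beta S'"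
  define c where "c = player_cost n alpha beta S"
  define c' where "c' = player_cost n alpha beta S'"
  have finE: "finite E" using vg unfolding valid_game_def by auto
  have SE: "\<forall>j<n. S j \<subseteq> E" using vg pne unfolding valid_game_def is_PNE_def is_profile_def by blast
  have S'E: "\<forall>j<n. S' j \<subseteq> E" using vg prof unfolding valid_game_def is_profile_def by blast
  have a0: "\<And>e. e \<in> E \<Longrightarrow> alpha e \<ge> 0" and b0: "\<And>e. e \<in> E \<Longrightarrow> beta e \<ge> 0"
    using vg unfolding valid_game_def by auto
  have Lnn: "\<And>e. L e \<ge> 0" "\<And>e. L' e \<ge> 0" unfolding L_def L'_def by (simp_all add: load_nn)
  have Mge: "\<And>j. j < n \<Longrightarrow> c' j \<le> M"
    unfolding M_def c'_def max_cost_def by (intro Max_ge) auto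
  have dev: "\<And>j. j < n \<Longrightarrow> c j \<le> (\<Sum>e\<in>S' j. alpha e * (L e + 1) + beta e)"
  proof -
    fix j assume j: "j < n"
    have "S' j \<in> Sig j" using prof j unfolding is_profile_def by auto
    then have "c j \<le> player_cost n alpha beta (S(j:=S' j)) j"
      using pne j unfolding is_PNE_def c_def by auto
    also have "\<dots> = (\<Sum>e\<in>S' j. alpha e * load n (S(j:=S' j)) e + beta e)"
      unfolding player_cost_def by simp
    also have "\<dots> \<le> (\<Sum>e\<in>S' j. alpha e * (L e + 1) + beta e)"
    proof (rule sum_mono)
      fix e assume "e \<in> S' j"
      then have "alpha e \<ge> 0" using S'E j a0 by auto
      then show "alpha e * load n (S(j:=S' j)) e + beta e \<le> alpha e * (L e + 1) + beta e"
        unfolding L_def using load_upd[of n S j "S' j" e] by (simp add: mult_left_mono)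
    qed
    finally show "c j \<le> (\<Sum>e\<in>S' j. alpha e * (L e + 1) + beta e)" .
  qed
  have SC: "(\<Sum>j<n. c j) = (\<Sum>e\<in>E. (alpha e * L e + beta e) * L e)"
    unfolding c_def player_cost_def L_def by (rule double_count[OF finE SE])
  have SC': "(\<Sum>j<n. c' j) = (\<Sum>e\<in>E. (alpha e * L' e + beta e) * L' e)"
    unfolding c'_def player_cost_def L'_def by (rule double_count[OF finE S'E])
  have "(\<Sum>j<n. c j) \<le> (\<Sum>j<n. \<Sum>e\<in>S' j. alpha e * (L e + 1) + beta e)"
    using dev by (intro sum_mono) auto
  also have "\<dots> = (\<Sum>e\<in>E. (alpha e * (L e + 1) + beta e) * L' e)"
    unfolding L'_def by (rule double_count[OF finE S'E])
  also have "\<dots> \<le> (\<Sum>e\<in>E. 1/4 * ((alpha e * L e + beta e) * L e) + 2 * ((alpha e * L' e + beta e) * L' e))"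
  proof (rule sum_mono)
    fix e assume e: "e \<in> E"
    have a: "alpha e \<ge> 0" using a0 e by auto
    have b: "beta e \<ge> 0" using b0 e by auto
    have q: "L' e \<le> L' e * L' e" unfolding L'_def by (rule load_sq)
    have p: "L e * L' e \<le> L e * L e / 4 + L' e * L' e"
    proof -
      have "0 \<le> (L e / 2 - L' e)^2" by simp
      then show ?thesis by (simp add: power2_eq_square algebra_simps)
    qed
    have 1: "alpha e * (L e * L' e) \<le> alpha e * (L e * L e / 4 + L' e * L' e)"
      using p a by (rule mult_left_mono)
    have 2: "alpha e * L' e \<le> alpha e * (L' e * L' e)" using q a by (rule mult_left_mono)
    have 3: "beta e * L' e \<ge> 0" "beta e * L e \<ge> 0" using b Lnn by auto
    show "(alpha e * (L e + 1) + beta e) * L' e \<le> 1/4 * ((alpha e * L e + beta e) * L e) + 2 * ((alpha e * L' e + beta e) * L' e)"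
      using 1 2 3 by (simp add: algebra_simps)
  qed
  also have "\<dots> = 1/4 * (\<Sum>j<n. c j) + 2 * (\<Sum>j<n. c' j)"
    unfolding SC SC' by (simp add: sum.distrib sum_distrib_left)
  finally have SCb: "(\<Sum>j<n. c j) \<le> 8/3 * (\<Sum>j<n. c' j)" by simp
  have "(\<Sum>j<n. c' j) \<le> (\<Sum>j<n. M)" using Mge by (intro sum_mono) auto
  then have SC'b: "(\<Sum>j<n. c' j) \<le> n * M" by simp
  define X where "X = (\<Sum>e\<in>E. alpha e * (L e * L e))"
  have "X \<le> (\<Sum>j<n. c j)" unfolding SC X_def
  proof (rule sum_mono)
    fix e assume e: "e \<in> E"
    have "beta e * L e \<ge> 0" using b0[OF e] Lnn by auto
    then show "alpha e * (L e * L e) \<le> (alpha e * L e + beta e) * L e" by (simp add: algebra_simps)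
  qed
  with SCb SC'b have Xb: "X \<le> 8/3 * (n * M)" by linarith
  define t where "t = sqrt n"
  have t1: "t \<ge> 1" unfolding t_def using n by simp
  have tt: "t * t = n" unfolding t_def by simp
  have S'iE: "S' i \<subseteq> E" using S'E i by auto
  have finS'i: "finite (S' i)" using S'iE finE finite_subset by auto
  have c'i: "c' i = (\<Sum>e\<in>S' i. alpha e * L' e + beta e)" unfolding c'_def player_cost_def L'_def by simp
  have A: "(\<Sum>e\<in>S' i. alpha e + beta e) \<le> M"
  proof -
    have "(\<Sum>e\<in>S' i. alpha e + beta e) \<le> (\<Sum>e\<in>S' i. alpha e * L' e + beta e)"
    proof (rule sum_mono)
      fix e assume e: "e \<in> S' i"
      have "L' e \<ge> 1" unfolding L'_def using load_ge1[of i n e S', OF i e] .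
      moreover have "alpha e \<ge> 0" using a0 e S'iE by auto
      ultimately show "alpha e + beta e \<le> alpha e * L' e + beta e"
        using mult_left_mono[of 1 "L' e" "alpha e"] by simp
    qed
    then show ?thesis using c'i Mge[OF i] by simp
  qed
  have A2: "(\<Sum>e\<in>S' i. alpha e) \<le> M"
  proof -
    have "(\<Sum>e\<in>S' i. alpha e) \<le> (\<Sum>e\<in>S' i. alpha e + beta e)"
      using b0 S'iE by (intro sum_mono) auto
    with A show ?thesis by simp
  qed
  have B: "(\<Sum>e\<in>S' i. alpha e * L e) \<le> t * (\<Sum>e\<in>S' i. alpha e) + (\<Sum>e\<in>S' i. alpha e * (L e * L e)) / (4 * t)"
  proof -
    have "(\<Sum>e\<in>S' i. alpha e * L e) \<le> (\<Sum>e\<in>S' i. t * alpha e + alpha e * (L e * L e) / (4 * t))"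
    proof (rule sum_mono)
      fix e assume e: "e \<in> S' i"
      have a: "alpha e \<ge> 0" using a0 e S'iE by auto
      have "0 \<le> (L e - 2 * t)^2" by simp
      then have "4 * t * L e \<le> L e * L e + 4 * (t * t)" by (simp add: power2_eq_square algebra_simps)
      then have "L e \<le> t + L e * L e / (4 * t)" using t1 by (simp add: field_simps)
      then have "alpha e * L e \<le> alpha e * (t + L e * L e / (4 * t))" using a by (rule mult_left_mono)
      then show "alpha e * L e \<le> t * alpha e + alpha e * (L e * L e) / (4 * t)"
        by (simp add: algebra_simps)
    qed
    also have "\<dots> = t * (\<Sum>e\<in>S' i. alpha e) + (\<Sum>e\<in>S' i. alpha e * (L e * L e)) / (4 * t)"
      by (simp add: sum.distrib sum_distrib_left sum_divide_distrib)
    finally show ?thesis .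
  qed
  have Xi: "(\<Sum>e\<in>S' i. alpha e * (L e * L e)) \<le> X"
    unfolding X_def using finE S'iE a0 Lnn by (intro sum_mono2) auto
  have M0: "M \<ge> 0"
  proof -
    have "c' i \<ge> 0" unfolding c'i using S'iE a0 b0 Lnn by (intro sum_nonneg) auto
    then show ?thesis using Mge[OF i] by simp
  qed
  have ci: "c i \<le> (\<Sum>e\<in>S' i. alpha e * L e) + (\<Sum>e\<in>S' i. alpha e + beta e)"
    using dev[OF i] by (simp add: sum.distrib algebra_simps)
  have "(\<Sum>e\<in>S' i. alpha e * (L e * L e)) / (4 * t) \<le> (8/3 * (n * M)) / (4 * t)"
    using Xi Xb t1 by (intro divide_right_mono) auto
  also have "\<dots> = 2/3 * t * M" using tt t1 by (simp add: field_simps)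
  finally have C: "(\<Sum>e\<in>S' i. alpha e * (L e * L e)) / (4 * t) \<le> 2/3 * t * M" .
  have "t * (\<Sum>e\<in>S' i. alpha e) \<le> t * M" using A2 t1 by (intro mult_left_mono) auto
  with ci A B C have "c i \<le> M + t * M + 2/3 * t * M" by linarith
  also have "\<dots> \<le> 3 * t * M" using t1 M0 mult_right_mono[of 1 t M] by linarith
  finally show ?thesis unfolding c_def t_def M_def by simp
qed

theorem mainTheorem14:
  "\<exists>C>0. \<forall>(n::nat) (E::nat set) Sig alpha beta S S'.
     n \<ge> 1 \<longrightarrow> valid_game n E Sig alpha beta \<longrightarrow>
     is_PNE n Sig alpha beta S \<longrightarrow> is_profile n Sig S' \<longrightarrow>
     max_cost n alpha beta S \<le> C * sqrt (real n) * max_cost n alpha beta S'"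
proof (intro exI[of _ 3] conjI allI impI)
  fix n :: nat and E :: "nat set" and Sig alpha beta S S'
  assume h: "n \<ge> 1" "valid_game n E Sig alpha beta" "is_PNE n Sig alpha beta S" "is_profile n Sig S'"
  show "max_cost n alpha beta S \<le> 3 * sqrt (real n) * max_cost n alpha beta S'"
    unfolding max_cost_def[of n alpha beta S]
    using h main_bound[OF h] by (intro Max.boundedI) auto
qed simp

end
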